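(* Let $M \in \mathbb{N}$, let $p \in \mathbb{Z}_M^{\times}$, let $q_1, q_2 \in \mathbb{Z}_M$, and let $K, C$ be positive integers with $\gcd(K, M) = 1$. Let $\varphi, \psi : \mathbb{Q} \to \mathbb{Z}$ satisfy $\varphi(x + C) = -\varphi(x)$ and $\psi(x + C) = -\psi(x)$ for all $x \in \frac{C}{K}\mathbb{Z}$ (their values are then reduced modulo $M$). Each grid point $x = \frac{j}{K}$ ($j \in \mathbb{Z}$) is identified with the element $\bar{x} := j \cdot K^{-1} \in \mathbb{Z}_M$. Let $x \mapsto p^x$ be an assignment $\frac{1}{K}\mathbb{Z} \to \mathbb{Z}_M$ satisfying $p^{x+a} = p^x \cdot p^a$ in $\mathbb{Z}_M$ for all $x \in \frac{1}{K}\mathbb{Z}$ and all integers $a \ge 0$. For $x \in \frac{1}{K}\mathbb{Z}$ with $\bar{x} \in \mathbb{Z}_M^{\times}$ define \[ s_M(x) := \big(p^x + q_1 \varphi(Cx) + q_2 \psi(Cx)\big)\cdot \bar{x}^{-1} \in \mathbb{Z}_M . \] Let $t \in \frac{1}{K}\mathbb{Z}$ and nonnegative integers $u, v$ be such that $\bar{t}$, $\overline{t+2v+1}$, $\overline{t+2u}$, $\overline{t+2u+2v+1}$ are units of $\mathbb{Z}_M$, and put $s_0 = s_M(t)$, $s_1 = s_M(t+2v+1)$, $s_2 = s_M(t+2u)$, $s_3 = s_M(t+2u+2v+1)$. Suppose the element $s_2 \cdot \overline{(t + 2u)} + s_3 \cdot \overline{(t + 2u + 2v + 1)}$ is a unit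 in $\mathbb{Z}_M$. Then \[ I_M(t;u,v) := \frac{s_0 \cdot \bar{t} + s_1 \cdot \overline{(t + 2v + 1)}}{s_2 \cdot \overline{(t + 2u)} + s_3 \cdot \overline{(t + 2u + 2v + 1)}} \equiv \frac{1}{p^{2u}} \pmod M. \]
   Context: All arithmetic is in the ring $\mathbb{Z}_M = \mathbb{Z}/M\mathbb{Z}$; $K^{-1}$ is the inverse of $K$ modulo $M$. The oscillators $\varphi,\psi$ are integer-valued and antiperiodic with antiperiod $C$ on the grid $\frac{C}{K}\mathbb{Z}$. *)

theory Defs
  imports "HOL-Number_Theory.Number_Theory"
begin

text \<open>Elements of Z_M are represented by integers; equality in Z_M is congruence mod M.\<close>

definition inv_mod :: "nat \<Rightarrow> int \<Rightarrow> int" where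
  "inv_mod M a = (SOME b. [a * b = 1] (mod int M))"

definition grid_bar :: "nat \<Rightarrow> int \<Rightarrow> rat \<Rightarrow> int" where
  "grid_bar M K x = \<lfloor>x * of_int K\<rfloor> * inv_mod M K"

definition sM :: "nat \<Rightarrow> int \<Rightarrow> int \<Rightarrow> int \<Rightarrow> int \<Rightarrow> (rat \<Rightarrow> int) \<Rightarrow> (rat \<Rightarrow> int)
    \<Rightarrow> (rat \<Rightarrow> int) \<Rightarrow> rat \<Rightarrow> int" where
  "sM M K C q1 q2 \<phi> \<psi> pw x =
     (pw x + q1 * \<phi> (of_int C * x) + q2 * \<psi> (of_int C * x)) * inv_mod M (grid_bar M K x)"

end

theory Submission
  imports Defs
begin

lemma inv_mod_cong:
  assumes "coprime a (int M)"
  shows "[a * inv_mod M a = 1] (mod int M)"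
  unfolding inv_mod_def using cong_solve_coprime_int[OF assms] by (rule someI_ex)

lemma anti_iter:
  fixes f :: "rat \<Rightarrow> int" and C K :: int
  assumes K: "K > 0"
    and anti: "\<And>n::int. f (of_int C * of_int n / of_int K + of_int C) = - f (of_int C * of_int n / of_int K)"
  shows "f (of_int C * of_int (n + int m * K) / of_int K) = (-1)^m * f (of_int C * of_int n / of_int K)"
proof (induction m)
  case 0 then show ?case by simp
next
  case (Suc m)
  have "of_int C * of_int (n + int (Suc m) * K) / of_int K
        = of_int C * of_int (n + int m * K) / of_int K + (of_int C :: rat)"
    using K by (simp add: field_simps)
  then show ?case using anti[of "n + int m * K"] Suc by simp
qed

lemma sM_cong:
  assumes "coprime (grid_bar M K x) (int M)"
  shows "[sM M K C q1 q2 \<phi> \<psi> pw x * grid_bar M K x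
          = pw x + q1 * \<phi> (of_int C * x) + q2 * \<psi> (of_int C * x)] (mod int M)"
proof -
  have "[(pw x + q1 * \<phi> (of_int C * x) + q2 * \<psi> (of_int C * x)) * (inv_mod M (grid_bar M K x) * grid_bar M K x)
      = (pw x + q1 * \<phi> (of_int C * x) + q2 * \<psi> (of_int C * x)) * 1] (mod int M)"
    using inv_mod_cong[OF assms] by (intro cong_mult) (auto simp: mult.commute)
  then show ?thesis unfolding sM_def by (simp add: mult.assoc)
qed

theorem mainTheorem2:
  fixes M :: nat and p q1 q2 K C :: int
    and \<phi> \<psi> :: "rat \<Rightarrow> int" and pw :: "rat \<Rightarrow> int"
    and tj :: int and u v :: nat
  assumes p_unit: "coprime p (int M)"
    and K_pos: "K > 0" and C_pos: "C > 0" and KM: "coprime K (int M)"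
    and phi_anti: "\<And>n::int. \<phi> (of_int C * of_int n / of_int K + of_int C)
                       = - \<phi> (of_int C * of_int n / of_int K)"
    and psi_anti: "\<And>n::int. \<psi> (of_int C * of_int n / of_int K + of_int C)
                       = - \<psi> (of_int C * of_int n / of_int K)"
    and pw_mult: "\<And>(j::int) (a::nat).
       [pw (of_int j / of_int K + of_nat a) = pw (of_int j / of_int K) * p ^ a] (mod int M)"
    and t_def: "t = of_int tj / of_int K"
    and u0: "coprime (grid_bar M K t) (int M)"
    and u1: "coprime (grid_bar M K (t + 2 * of_nat v + 1)) (int M)"
    and u2: "coprime (grid_bar M K (t + 2 * of_nat u)) (int M)"
    and u3: "coprime (grid_bar M K (t + 2 * of_nat u + 2 * of_nat v + 1)) (int M)"
    and den_unit: "coprime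
       (sM M K C q1 q2 \<phi> \<psi> pw (t + 2 * of_nat u) * grid_bar M K (t + 2 * of_nat u)
        + sM M K C q1 q2 \<phi> \<psi> pw (t + 2 * of_nat u + 2 * of_nat v + 1)
            * grid_bar M K (t + 2 * of_nat u + 2 * of_nat v + 1)) (int M)"
  shows "[(sM M K C q1 q2 \<phi> \<psi> pw t * grid_bar M K t
           + sM M K C q1 q2 \<phi> \<psi> pw (t + 2 * of_nat v + 1) * grid_bar M K (t + 2 * of_nat v + 1))
          * inv_mod M
             (sM M K C q1 q2 \<phi> \<psi> pw (t + 2 * of_nat u) * grid_bar M K (t + 2 * of_nat u)
              + sM M K C q1 q2 \<phi> \<psi> pw (t + 2 * of_nat u + 2 * of_nat v + 1)
                  * grid_bar M K (t + 2 * of_nat u + 2 * of_nat v + 1))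
         = inv_mod M (p ^ (2 * u))] (mod int M)"
proof -
  let ?A = "\<lambda>x. pw x + q1 * \<phi> (of_int C * x) + q2 * \<psi> (of_int C * x)"
  let ?S = "\<lambda>x. sM M K C q1 q2 \<phi> \<psi> pw x * grid_bar M K x"
  define a where "a = 2 * v + 1"
  have Kne: "(of_int K :: rat) \<noteq> 0" using K_pos by simp
  have ev[simp]: "\<And>m. even m \<Longrightarrow> (-1::int)^m = 1" "\<And>m. odd m \<Longrightarrow> (-1::int)^m = -1" by auto
  have Ceq: "\<And>m::nat. of_int C * (t + of_nat m) = of_int C * of_int (tj + int m * K) / (of_int K :: rat)"
    using Kne unfolding t_def by (simp add: field_simps)
  have C0: "of_int C * t = of_int C * of_int tj / (of_int K :: rat)" unfolding t_def by simp
  have phiA: "\<And>m. \<phi> (of_int C * (t + of_nat m)) = (-1)^m * \<phi> (of_int C * t)"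
    unfolding Ceq C0 by (rule anti_iter[OF K_pos phi_anti])
  have psiA: "\<And>m. \<psi> (of_int C * (t + of_nat m)) = (-1)^m * \<psi> (of_int C * t)"
    unfolding Ceq C0 by (rule anti_iter[OF K_pos psi_anti])
  have pwA: "\<And>m. [pw (t + of_nat m) = pw t * p ^ m] (mod int M)"
    unfolding t_def by (rule pw_mult)
  have e1: "t + 2 * of_nat v + 1 = t + of_nat a" unfolding a_def by simp
  have e2: "t + 2 * of_nat u = t + of_nat (2*u)" by simp
  have e3: "t + 2 * of_nat u + 2 * of_nat v + 1 = t + of_nat (2*u + a)" unfolding a_def by simp
  have oa: "odd a" "odd (2*u+a)" unfolding a_def by auto
  have N: "[?S t + ?S (t + 2 * of_nat v + 1) = pw t * (1 + p ^ a)] (mod int M)"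
  proof -
    have "[?S t + ?S (t + 2 * of_nat v + 1) = ?A t + ?A (t + of_nat a)] (mod int M)"
      using sM_cong[OF u0] sM_cong[OF u1] unfolding e1 by (intro cong_add)
    also have "?A t + ?A (t + of_nat a) = pw t + pw (t + of_nat a)"
    proof -
      have "\<phi> (of_int C * (t + of_nat a)) = - \<phi> (of_int C * t)" "\<psi> (of_int C * (t + of_nat a)) = - \<psi> (of_int C * t)"
        using phiA[of a] psiA[of a] ev(2)[OF oa(1)] by simp_all
      then show ?thesis by (simp add: algebra_simps)
    qed
    also have "[pw t + pw (t + of_nat a) = pw t * (1 + p ^ a)] (mod int M)"
    proof -
      have eq: "pw t * (1 + p^a) = pw t + pw t * p^a" by (simp add: distrib_left)
      show ?thesis using cong_add[OF cong_refl[of "pw t"] pwA[of a]] by (simp only: eq)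
    qed
    finally show ?thesis .
  qed
  have D: "[?S (t + 2 * of_nat u) + ?S (t + 2 * of_nat u + 2 * of_nat v + 1) = p^(2*u) * (pw t * (1 + p ^ a))] (mod int M)"
  proof -
    have "[?S (t + 2 * of_nat u) + ?S (t + 2 * of_nat u + 2 * of_nat v + 1) = ?A (t + of_nat (2*u)) + ?A (t + of_nat (2*u+a))] (mod int M)"
      using sM_cong[OF u2, unfolded e2] sM_cong[OF u3, unfolded e3] unfolding e3 unfolding e2 by (intro cong_add)
    also have "?A (t + of_nat (2*u)) + ?A (t + of_nat (2*u+a)) = pw (t + of_nat (2*u)) + pw (t + of_nat (2*u+a))"
    proof -
      have "\<phi> (of_int C * (t + of_nat (2*u+a))) = - \<phi> (of_int C * t)" "\<psi> (of_int C * (t + of_nat (2*u+a))) = - \<psi> (of_int C * t)"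
        using phiA[of "2*u+a"] psiA[of "2*u+a"] ev(2)[OF oa(2)] by (simp_all only:)
      moreover have "\<phi> (of_int C * (t + of_nat (2*u))) = \<phi> (of_int C * t)" "\<psi> (of_int C * (t + of_nat (2*u))) = \<psi> (of_int C * t)"
        using phiA[of "2*u"] psiA[of "2*u"] ev(1)[of "2*u"] by (simp_all only: even_mult_iff even_numeral simp_thms mult_1)
      ultimately show ?thesis by (simp only:)
    qed
    also have "[pw (t + of_nat (2*u)) + pw (t + of_nat (2*u+a)) = pw t * p^(2*u) + pw t * p^(2*u+a)] (mod int M)"
      using pwA[of "2*u"] pwA[of "2*u+a"] by (intro cong_add)
    also have "pw t * p^(2*u) + pw t * p^(2*u+a) = p^(2*u) * (pw t * (1 + p ^ a))"
    proof -
      have g: "\<And>X Y Z::int. Z*X + Z*(X*Y) = X*(Z*(1+Y))" by (simp add: algebra_simps)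
      show ?thesis unfolding power_add by (rule g)
    qed
    finally show ?thesis .
  qed
  define Nv where "Nv = pw t * (1 + p ^ a)"
  define P where "P = p^(2*u)"
  define Dv where "Dv = ?S (t + 2 * of_nat u) + ?S (t + 2 * of_nat u + 2 * of_nat v + 1)"
  have DPN: "[Dv = P * Nv] (mod int M)" using D unfolding Dv_def P_def Nv_def .
  have cD: "coprime Dv (int M)" using den_unit unfolding Dv_def .
  have cPN: "coprime (P * Nv) (int M)" using cD DPN
    by (metis cong_imp_coprime)
  have cP: "coprime P (int M)" and cN: "coprime Nv (int M)" using cPN by auto
  have iD: "[Dv * inv_mod M Dv = 1] (mod int M)" by (rule inv_mod_cong[OF cD])
  have iP: "[P * inv_mod M P = 1] (mod int M)" by (rule inv_mod_cong[OF cP])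
  have "[Nv * inv_mod M Dv = Nv * inv_mod M Dv * (P * inv_mod M P)] (mod int M)"
    using cong_mult[OF cong_refl[of "Nv * inv_mod M Dv"] iP] by (simp add: cong_sym)
  also have "Nv * inv_mod M Dv * (P * inv_mod M P) = (P * Nv) * inv_mod M Dv * inv_mod M P"
    by (simp only: mult_ac)
  also have "[(P * Nv) * inv_mod M Dv * inv_mod M P = Dv * inv_mod M Dv * inv_mod M P] (mod int M)"
    using DPN by (intro cong_mult cong_refl) (simp add: cong_sym)
  also have "[Dv * inv_mod M Dv * inv_mod M P = 1 * inv_mod M P] (mod int M)"
    using iD by (intro cong_mult cong_refl)
  finally have R: "[Nv * inv_mod M Dv = inv_mod M P] (mod int M)" by simp
  have "[(?S t + ?S (t + 2 * of_nat v + 1)) * inv_mod M Dv = Nv * inv_mod M Dv] (mod int M)"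
    using N unfolding Nv_def by (intro cong_mult cong_refl)
  from cong_trans[OF this R] show ?thesis unfolding Dv_def P_def .
qed

end
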